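(* Let $\alpha=1$ and $\lambda\in\mathbb{N}$. Let $\phi(x;\lambda)$, $\lambda=0,1,2,\dots$, be defined by $\phi(x;0)=1$, $\phi(x;1)=\frac{I_1(x)}{I_0(x)}$ and $$\phi(x;\lambda+1)+\phi(x;\lambda-1)=\frac{2\lambda}{x}\frac{\phi(x;\lambda)}{1-\phi^2(x;\lambda)}.$$ Let $$y(x)=\frac{\phi(x;\lambda+1)}{\phi(x;\lambda)},\qquad R(x)=y'(x)+y^2(x)+\frac{(1-2\lambda)y(x)}{x}+1,\qquad g(s;1,\lambda)=1-\frac{2}{R(\sqrt s)},$$ $$\mathcal{H}(s;1,\lambda)=\frac{(sg'(s;1,\lambda))^2}{4g(s;1,\lambda)(g(s;1,\lambda)-1)^2}-\frac{(\lambda+g(s;1,\lambda))^2}{4g(s;1,\lambda)}+\frac{sg(s;1,\lambda)}{4(g(s;1,\lambda)-1)}.$$ Then $g(s;1,\lambda)$ is a closed-form solution of $$g''=\frac{3g-1}{2g(g-1)}(g')^2-\frac{g'}{s}+\frac{(g-1)^2}{2s^2}\left(g-\frac{\lambda^2}{g}\right)+\frac{g}{2s}$$ (i.e. $P_V(\frac12,-\frac{\lambda^2}{2},\frac12,0)$), and $\mathcal{H}(s;1,\lambda)$ is the corresponding solution of $(s\mathcal{H}'')^2=\mathcal{H}'(4\mathcal{H}'-1)(\mathcal{H}-s\mathcal{H}')+\frac1{16}\left[4(1+\lambda)\mathcal{H}'-\lambda\right]^2$.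
   Context: $I_k$ denotes the modified Bessel function of the first kind of order $k$; primes denote derivatives. *)

theory Defs
  imports "HOL-Analysis.Analysis"
begin

definition besselI :: "nat \<Rightarrow> real \<Rightarrow> real" where
  "besselI k x = (\<Sum>m. (x / 2) ^ (2 * m + k) / (fact m * fact (m + k)))"

fun phi :: "real \<Rightarrow> nat \<Rightarrow> real" where
  "phi x 0 = 1"
| "phi x (Suc 0) = besselI 1 x / besselI 0 x"
| "phi x (Suc (Suc n)) =
     2 * real (Suc n) / x * phi x (Suc n) / (1 - (phi x (Suc n))^2) - phi x n"

definition yfun :: "nat \<Rightarrow> real \<Rightarrow> real" where
  "yfun lam x = phi x (lam + 1) / phi x lam"

definition Rfun :: "nat \<Rightarrow> real \<Rightarrow> real" where
  "Rfun lam x = deriv (yfun lam) x + (yfun lam x)^2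
                + (1 - 2 * real lam) * yfun lam x / x + 1"

definition gfun :: "nat \<Rightarrow> real \<Rightarrow> real" where
  "gfun lam s = 1 - 2 / Rfun lam (sqrt s)"

definition Hfun :: "nat \<Rightarrow> real \<Rightarrow> real" where
  "Hfun lam s =
     (s * deriv (gfun lam) s)^2 / (4 * gfun lam s * (gfun lam s - 1)^2)
     - (real lam + gfun lam s)^2 / (4 * gfun lam s)
     + s * gfun lam s / (4 * (gfun lam s - 1))"

end

theory Submission
  imports Defs
begin


definition bc :: "nat \<Rightarrow> nat \<Rightarrow> real" where
  "bc k m = inverse (fact m * fact (m + k))"

definition bF :: "nat \<Rightarrow> real \<Rightarrow> real" where
  "bF k z = (\<Sum>m. bc k m * z ^ m)"

lemma bF_summable: "summable (\<lambda>m. bc k m * z ^ m)"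
proof (rule summable_comparison_test[OF _ summable_exp[of "\<bar>z\<bar>"]])
  show "\<exists>N. \<forall>n\<ge>N. norm (bc k n * z ^ n) \<le> inverse (fact n) * \<bar>z\<bar> ^ n"
  proof (intro exI allI impI)
    fix n :: nat
    have f1: "(1::real) \<le> fact (n + k)" by simp
    have "bc k n \<le> inverse (fact n)" unfolding bc_def
      using f1 by (simp add: field_simps)
    moreover have "bc k n \<ge> 0" unfolding bc_def by simp
    ultimately show "norm (bc k n * z ^ n) \<le> inverse (fact n) * \<bar>z\<bar> ^ n"
      by (simp add: abs_mult power_abs mult_right_mono)
  qed
qed

lemma diffs_bc: "diffs (bc k) = bc (Suc k)"
proof (rule ext)
  fix n
  have e: "Suc n + k = Suc (n + k)" "n + Suc k = Suc (n + k)" by simp_all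
  have f: "fact (Suc n) = real (Suc n) * fact n" by simp
  show "diffs (bc k) n = bc (Suc k) n"
  proof -
    have "fact (Suc (n + k)) > (0::real)" "fact n > (0::real)" by simp_all
    then show ?thesis unfolding diffs_def bc_def e f by (simp add: inverse_mult_distrib del: fact_Suc)
  qed
qed

lemma bF_deriv: "(bF k has_field_derivative bF (Suc k) z) (at z)"
proof -
  have "((\<lambda>x. \<Sum>n. bc k n * x^n) has_field_derivative (\<Sum>n. diffs (bc k) n * z^n)) (at z)"
    by (rule termdiffs_strong_converges_everywhere) (rule bF_summable)
  then show ?thesis unfolding diffs_bc bF_def[abs_def] .
qed

lemma bF_chain[derivative_intros]:
  "(f has_field_derivative f') (at x within S) \<Longrightarrow>
   ((\<lambda>x. bF k (f x)) has_field_derivative bF (Suc k) (f x) * f') (at x within S)"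
  using DERIV_chain2[OF bF_deriv] by blast

lemma besselI_bF: "besselI k x = (x/2)^k * bF k (x^2/4)"
proof -
  have "besselI k x = (\<Sum>m. (x/2)^k * (bc k m * (x^2/4)^m))"
    unfolding besselI_def bc_def
  proof (rule suminf_cong)
    fix m
    have q: "(x/2)^2 = x^2/4" by (simp add: power_divide)
    have "(x/2)^(2*m+k) = (x/2)^k * ((x/2)^2)^m"
      by (simp add: power_add power_mult[symmetric] mult.commute)
    then have "(x/2)^(2*m+k) = (x/2)^k * (x^2/4)^m" unfolding q .
    then show "(x / 2) ^ (2 * m + k) / (fact m * fact (m + k)) = (x / 2) ^ k * (inverse (fact m * fact (m + k)) * (x\<^sup>2 / 4) ^ m)"
      by (simp add: field_simps)
  qed
  also have "\<dots> = (x/2)^k * bF k (x^2/4)" unfolding bF_def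
    by (rule suminf_mult[OF bF_summable])
  finally show ?thesis .
qed

lemma bF0_pos: assumes "z \<ge> 0" shows "bF 0 z \<ge> 1"
proof -
  have "sum (\<lambda>m. bc 0 m * z ^ m) {0} \<le> bF 0 z" unfolding bF_def
    by (rule sum_le_suminf[OF bF_summable]) (use assms in \<open>auto simp: bc_def\<close>)
  then show ?thesis by (simp add: bc_def)
qed

lemma bc_rel: "bc 0 (Suc m) - bc 1 (Suc m) = bc 2 m"
proof -
  have f1: "fact (Suc m) = real (m+1) * fact m" by simp
  have f2: "fact (Suc m + 1) = real (m+2) * real (m+1) * fact m"
    by (simp add: algebra_simps)
  have f3: "fact (m + 2) = real (m+2) * real (m+1) * fact m"
    by (simp add: algebra_simps numeral_2_eq_2)
  have p: "fact m \<noteq> (0::real)" by simp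
  have key: "\<And>a n::real. a \<noteq> 0 \<Longrightarrow> n + 1 \<noteq> 0 \<Longrightarrow> n + 2 \<noteq> 0 \<Longrightarrow>
     inverse ((n+1) * a * ((n+1) * a)) - inverse ((n+1) * a * ((n+2) * (n+1) * a)) = inverse (a * ((n+2) * (n+1) * a))"
    apply (simp add: inverse_eq_divide)
    by (simp add: divide_simps)
  have "inverse (fact (Suc m) * fact (Suc m + 0)) - inverse (fact (Suc m) * fact (Suc m + 1)) =
        inverse (fact m * fact (m + 2)::real)"
    unfolding f1 f2 f3 using key[OF p, of "real m"] by (simp add: algebra_simps)
  then show ?thesis unfolding bc_def .
qed

lemma bF_rel: "bF 0 z = bF 1 z + z * bF 2 z"
proof -
  have s0: "(\<lambda>m. bc 0 m * z^m - bc 1 m * z^m) sums (bF 0 z - bF 1 z)"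
    unfolding bF_def by (intro sums_diff summable_sums bF_summable)
  have "(\<lambda>m. bc 0 (Suc m) * z^(Suc m) - bc 1 (Suc m) * z^(Suc m)) sums (bF 0 z - bF 1 z)"
    using s0 sums_Suc_iff[of "\<lambda>m. bc 0 m * z^m - bc 1 m * z^m"] by (simp add: bc_def)
  moreover have "(\<lambda>m. bc 0 (Suc m) * z^(Suc m) - bc 1 (Suc m) * z^(Suc m)) = (\<lambda>m. z * (bc 2 m * z^m))"
    by (rule ext) (simp add: bc_rel[symmetric] algebra_simps)
  ultimately have "(\<lambda>m. z * (bc 2 m * z^m)) sums (bF 0 z - bF 1 z)" by simp
  moreover have "(\<lambda>m. z * (bc 2 m * z^m)) sums (z * bF 2 z)" unfolding bF_def
    by (intro sums_mult summable_sums bF_summable)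
  ultimately have "bF 0 z - bF 1 z = z * bF 2 z" using sums_unique2 by blast
  then show ?thesis by simp
qed

lemma phi1_eq: "phi x (Suc 0) = (x/2) * bF 1 (x^2/4) / bF 0 (x^2/4)"
  by (simp add: besselI_bF)

lemma phi1_deriv:
  assumes "x > 0"
  shows "((\<lambda>t. phi t (Suc 0)) has_field_derivative (1 - (phi x (Suc 0))^2) * phi x 0 - phi x (Suc 0) / x) (at x)"
proof -
  let ?z = "x^2/4"
  have p: "bF 0 ?z \<ge> 1" by (rule bF0_pos) simp
  have "((\<lambda>t. (t/2) * bF 1 (t^2/4) / bF 0 (t^2/4)) has_field_derivative
     ((1/2 * bF 1 ?z + x/2 * (bF 2 ?z * (2*x/4))) * bF 0 ?z - x/2 * bF 1 ?z * (bF 1 ?z * (2*x/4))) / (bF 0 ?z)^2) (at x)"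
    using p by (auto intro!: derivative_eq_intros simp: power2_eq_square numeral_2_eq_2 field_simps)
  moreover have "((1/2 * bF 1 ?z + x/2 * (bF 2 ?z * (2*x/4))) * bF 0 ?z - x/2 * bF 1 ?z * (bF 1 ?z * (2*x/4))) / (bF 0 ?z)^2
     = (1 - ((x/2) * bF 1 ?z / bF 0 ?z)^2) * 1 - (x/2) * bF 1 ?z / bF 0 ?z / x"
  proof -
    have r: "bF 2 ?z = (bF 0 ?z - bF 1 ?z) / ?z" using bF_rel[of ?z] assms by (simp add: field_simps)
    show ?thesis unfolding r using p assms by (simp add: field_simps power2_eq_square)
  qed
  ultimately show ?thesis unfolding phi1_eq by simp
qed


lemma step_alg:
  fixes a b a1 b1 x r :: real
  assumes e: "1 - b^2 \<noteq> 0" and x: "x \<noteq> 0"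
    and ha: "a1 = -(1-a^2)*b + (r-1)*a/x" and hb: "b1 = (1-b^2)*a - r*b/x"
  shows "(-(2*r/x^2))*(b/(1-b^2)) + ((b1*(1-b^2) - (-(2*b*b1))*b)/(1-b^2)^2)*(2*r/x) - a1
     = (1 - (2*r/x*b/(1-b^2) - a)^2)*b - (r+1)*(2*r/x*b/(1-b^2) - a)/x"
proof -
  define E where "E = 1 - b^2"
  have E0: "E \<noteq> 0" using e E_def by simp
  have bb: "b^2 = 1 - E" using E_def by simp
  have hb': "b1 = E*a - r*b/x" using hb E_def by simp
  show ?thesis unfolding E_def[symmetric] ha hb' using E0 x
    apply (simp add: field_simps)
    unfolding E_def apply algebra
    done
qed
lemma A_from_B:
  fixes a b c x r :: real
  assumes e: "1 - b^2 \<noteq> 0" and x: "x \<noteq> 0" and hc: "c = 2*r/x*b/(1-b^2) - a"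
  shows "(1-b^2)*a - r*b/x = -(1-b^2)*c + r*b/x"
  unfolding hc using e x by (simp add: field_simps)

lemma phi_derivs:
  assumes x: "x > 0" and h: "\<forall>j. 1 \<le> j \<and> j \<le> n \<longrightarrow> 1 - (phi x j)^2 \<noteq> 0"
  shows "((\<lambda>t. phi t n) has_real_derivative (-(1 - (phi x n)^2) * phi x (Suc n) + real n * phi x n / x)) (at x) \<and>
        ((\<lambda>t. phi t (Suc n)) has_real_derivative ((1 - (phi x (Suc n))^2) * phi x n - real (Suc n) * phi x (Suc n) / x)) (at x)"
  using h
proof (induction n)
  case 0
  have c: "((\<lambda>t. phi t 0) has_real_derivative 0) (at x)" by simp
  show ?case using c phi1_deriv[OF x] by simp
next
  case (Suc n)
  have hn: "\<forall>j. 1 \<le> j \<and> j \<le> n \<longrightarrow> 1 - (phi x j)^2 \<noteq> 0" using Suc.prems by simp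
  have e: "1 - (phi x (Suc n))^2 \<noteq> 0" using Suc.prems by simp
  from Suc.IH[OF hn] have hA: "((\<lambda>t. phi t n) has_real_derivative (-(1 - (phi x n)^2) * phi x (Suc n) + real n * phi x n / x)) (at x)"
    and hB: "((\<lambda>t. phi t (Suc n)) has_real_derivative ((1 - (phi x (Suc n))^2) * phi x n - real (Suc n) * phi x (Suc n) / x)) (at x)"
    by auto
  have rec: "\<And>t. phi t (Suc (Suc n)) = 2 * real (Suc n) / t * phi t (Suc n) / (1 - (phi t (Suc n))^2) - phi t n"
    by simp
  define r where "r = real (Suc n)"
  define b where "b = phi x (Suc n)"
  define a where "a = phi x n"
  define b1 where "b1 = (1 - b^2) * a - r * b / x"
  define a1 where "a1 = -(1 - a^2) * b + (r - 1) * a / x"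
  have hA': "((\<lambda>t. phi t n) has_real_derivative a1) (at x)" using hA unfolding a1_def a_def b_def r_def by simp
  have hB': "((\<lambda>t. phi t (Suc n)) has_real_derivative b1) (at x)" using hB unfolding b1_def a_def b_def r_def by simp
  have A1: "((\<lambda>t. phi t (Suc n)) has_real_derivative (-(1 - (phi x (Suc n))^2) * phi x (Suc (Suc n)) + real (Suc n) * phi x (Suc n) / x)) (at x)"
  proof -
    have eqA: "(1 - (phi x (Suc n))^2) * phi x n - real (Suc n) * phi x (Suc n) / x
       = -(1 - (phi x (Suc n))^2) * phi x (Suc (Suc n)) + real (Suc n) * phi x (Suc n) / x"
      by (rule A_from_B[OF e _ rec[of x]]) (use x in simp)
    show ?thesis using hB unfolding eqA .
  qed
  have fe: "(\<lambda>t. phi t (Suc (Suc n))) = (\<lambda>t. (2*r/t) * (phi t (Suc n) / (1 - (phi t (Suc n))^2)) - phi t n)"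
    unfolding r_def by (rule ext) simp
  have d1: "((\<lambda>t. 2*r/t) has_real_derivative -(2*r/x^2)) (at x)"
    using x by (auto intro!: derivative_eq_intros simp: power2_eq_square field_simps)
  have d2: "((\<lambda>t. 1 - (phi t (Suc n))^2) has_real_derivative -(2*b*b1)) (at x)"
    using hB' unfolding b_def by (auto intro!: derivative_eq_intros)
  have d3: "((\<lambda>t. phi t (Suc n) / (1 - (phi t (Suc n))^2)) has_real_derivative (b1*(1-b^2) - (-(2*b*b1))*b)/(1-b^2)^2) (at x)"
    using DERIV_quotient[OF hB' d2] e unfolding b_def by (simp add: power2_eq_square)
  have d4: "((\<lambda>t. (2*r/t) * (phi t (Suc n) / (1 - (phi t (Suc n))^2)) - phi t n) has_real_derivative
     (-(2*r/x^2))*(b/(1-b^2)) + ((b1*(1-b^2) - (-(2*b*b1))*b)/(1-b^2)^2)*(2*r/x) - a1) (at x)"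
    using DERIV_diff[OF DERIV_mult[OF d1 d3] hA'] unfolding b_def by simp
  have eq: "(-(2*r/x^2))*(b/(1-b^2)) + ((b1*(1-b^2) - (-(2*b*b1))*b)/(1-b^2)^2)*(2*r/x) - a1
     = (1 - (2*r/x*b/(1-b^2) - a)^2)*b - (r+1)*(2*r/x*b/(1-b^2) - a)/x"
    by (rule step_alg) (use e x in \<open>simp_all add: a1_def b1_def b_def\<close>)
  have B1: "((\<lambda>t. phi t (Suc (Suc n))) has_real_derivative
     (1 - (phi x (Suc (Suc n)))^2) * phi x (Suc n) - real (Suc (Suc n)) * phi x (Suc (Suc n)) / x) (at x)"
  proof -
    have c: "phi x (Suc (Suc n)) = 2*r/x*b/(1-b^2) - a" unfolding a_def b_def r_def by simp
    have rs: "real (Suc (Suc n)) = r + 1" unfolding r_def by simp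
    have d5: "((\<lambda>t. phi t (Suc (Suc n))) has_real_derivative (1 - (2*r/x*b/(1-b^2) - a)^2)*b - (r+1)*(2*r/x*b/(1-b^2) - a)/x) (at x)"
      using d4 unfolding fe eq .
    show ?thesis unfolding c rs b_def[symmetric] using d5 .
  qed
  show ?case using A1 B1 by simp
qed


definition Qd :: "real \<Rightarrow> real \<Rightarrow> real \<Rightarrow> real \<Rightarrow> real" where
  "Qd l q y X = 2*(1-q)*(q*y-l*X)"
definition Yd :: "real \<Rightarrow> real \<Rightarrow> real \<Rightarrow> real \<Rightarrow> real" where
  "Yd l q y X = 1+(2*q-1)*y^2-(2*l+1)*y*X"
definition Dd :: "real \<Rightarrow> real \<Rightarrow> real \<Rightarrow> real \<Rightarrow> real" where
  "Dd l q y X = 1+q*y^2-2*l*y*X"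
definition D1d :: "real \<Rightarrow> real \<Rightarrow> real \<Rightarrow> real \<Rightarrow> real" where
  "D1d l q y X = Qd l q y X*y^2+2*q*y*Yd l q y X-2*l*(Yd l q y X*X+y*(-(X^2)))"
definition D2d :: "real \<Rightarrow> real \<Rightarrow> real \<Rightarrow> real \<Rightarrow> real" where
  "D2d l q y X = (let Q1 = Qd l q y X; Y1 = Yd l q y X; X1 = -(X^2);
  Q2=2*(-Q1)*(q*y-l*X)+2*(1-q)*(Q1*y+q*Y1-l*X1);
  Y2=2*Q1*y^2+(2*q-1)*2*y*Y1-(2*l+1)*(Y1*X+y*X1);
  X2=-(2*X*X1)
  in Q2*y^2+Q1*2*y*Y1+2*(Q1*y*Y1+q*Y1*Y1+q*y*Y2)-2*l*(Y2*X+Y1*X1+Y1*X1+y*X2))"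

lemma core:
  "let D = Dd l q y X; D1 = D1d l q y X; D2 = D2d l q y X in
   2*D*(D-1)*D2 = (2*D-1)*D1^2-2*D*(D-1)*D1*X+4*((D-1)^2-l^2*D^2)*X^2+4*D^2*(D-1)^2"
  unfolding Let_def Dd_def D1d_def D2d_def Qd_def Yd_def by algebra

lemma inv_deriv: "x \<noteq> 0 \<Longrightarrow> ((\<lambda>t::real. inverse t) has_real_derivative -((inverse x)^2)) (at x)"
  using DERIV_inverse[of x] by (simp add: power2_eq_square)

lemma Dd_deriv:
  assumes x: "x \<noteq> 0"
    and hq: "(q has_real_derivative Qd l (q x) (y x) (inverse x)) (at x)"
    and hy: "(y has_real_derivative Yd l (q x) (y x) (inverse x)) (at x)"
  shows "((\<lambda>t. Dd l (q t) (y t) (inverse t)) has_real_derivative D1d l (q x) (y x) (inverse x)) (at x)"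
  unfolding Dd_def D1d_def
  using x apply (auto intro!: derivative_eq_intros hq hy)
  apply (simp add: algebra_simps power2_eq_square)
  done

lemma D1d_deriv:
  assumes x: "x \<noteq> 0"
    and hq: "(q has_real_derivative Qd l (q x) (y x) (inverse x)) (at x)"
    and hy: "(y has_real_derivative Yd l (q x) (y x) (inverse x)) (at x)"
  shows "((\<lambda>t. D1d l (q t) (y t) (inverse t)) has_real_derivative D2d l (q x) (y x) (inverse x)) (at x)"
  unfolding D2d_def D1d_def Qd_def Yd_def Let_def
  using hq hy unfolding Qd_def Yd_def
  apply -
  using x apply (auto intro!: derivative_eq_intros)
  apply (simp add: algebra_simps power2_eq_square)
  done


lemma yfun_eq: "yfun lam = (\<lambda>t. phi t (Suc lam) / phi t lam)"
  by (rule ext) (simp add: yfun_def)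

lemma qY_derivs:
  assumes x: "x > 0" and hj: "\<forall>j. 1 \<le> j \<and> j \<le> lam \<longrightarrow> 1 - (phi x j)^2 \<noteq> 0"
    and u: "phi x lam \<noteq> 0"
  shows "((\<lambda>t. 1 - (phi t lam)^2) has_real_derivative Qd (real lam) (1-(phi x lam)^2) (yfun lam x) (inverse x)) (at x)"
    and "(yfun lam has_real_derivative Yd (real lam) (1-(phi x lam)^2) (yfun lam x) (inverse x)) (at x)"
proof -
  note pd = phi_derivs[OF x hj]
  define U where "U = phi x lam"
  define V where "V = phi x (Suc lam)"
  define l where "l = real lam"
  have hU: "((\<lambda>t. phi t lam) has_real_derivative (-(1 - U^2) * V + l * U / x)) (at x)"
    using pd unfolding U_def V_def l_def by blast
  have hV: "((\<lambda>t. phi t (Suc lam)) has_real_derivative ((1 - V^2) * U - (l+1) * V / x)) (at x)"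
    using pd unfolding U_def V_def l_def by (simp add: add.commute)
  have Ux: "phi x lam = U" "phi x (Suc lam) = V" "yfun lam x = V / U" unfolding U_def V_def yfun_def by simp_all
  have d1: "((\<lambda>t. 1 - (phi t lam)^2) has_real_derivative 0 - real 2 * ((-(1 - U^2) * V + l * U / x) * U ^ (2 - Suc 0))) (at x)"
    using DERIV_diff[OF DERIV_const DERIV_power[OF hU, of 2]] unfolding Ux .
  have e1: "0 - real 2 * ((-(1 - U^2) * V + l * U / x) * U ^ (2 - Suc 0)) = Qd l (1-U^2) (V/U) (inverse x)"
    unfolding Qd_def using x u unfolding Ux by (simp add: field_simps power2_eq_square)
  show "((\<lambda>t. 1 - (phi t lam)^2) has_real_derivative Qd (real lam) (1-(phi x lam)^2) (yfun lam x) (inverse x)) (at x)"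
    using d1 unfolding e1 unfolding Ux l_def .
  have d2: "(yfun lam has_real_derivative (((1 - V^2) * U - (l+1) * V / x) * U - (-(1 - U^2) * V + l * U / x) * V) / U ^ Suc (Suc 0)) (at x)"
    unfolding yfun_eq using DERIV_quotient[OF hV hU] u unfolding Ux by simp
  have e2: "(((1 - V^2) * U - (l+1) * V / x) * U - (-(1 - U^2) * V + l * U / x) * V) / U ^ Suc (Suc 0) = Yd l (1-U^2) (V/U) (inverse x)"
    unfolding Yd_def using x u unfolding Ux by (simp add: field_simps power2_eq_square)
  show "(yfun lam has_real_derivative Yd (real lam) (1-(phi x lam)^2) (yfun lam x) (inverse x)) (at x)"
    using d2 unfolding e2 unfolding Ux l_def .
qed


definition qf :: "nat \<Rightarrow> real \<Rightarrow> real" where "qf lam x = 1 - (phi x lam)^2"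
definition Dx :: "nat \<Rightarrow> real \<Rightarrow> real" where
  "Dx lam x = Dd (real lam) (qf lam x) (yfun lam x) (inverse x)"
definition D1x :: "nat \<Rightarrow> real \<Rightarrow> real" where
  "D1x lam x = D1d (real lam) (qf lam x) (yfun lam x) (inverse x)"
definition D2x :: "nat \<Rightarrow> real \<Rightarrow> real" where
  "D2x lam x = D2d (real lam) (qf lam x) (yfun lam x) (inverse x)"
definition Cond :: "nat \<Rightarrow> real \<Rightarrow> bool" where
  "Cond lam x \<longleftrightarrow> x > 0 \<and> (\<forall>j. 1 \<le> j \<and> j \<le> lam \<longrightarrow> 1 - (phi x j)^2 \<noteq> 0)
     \<and> phi x lam \<noteq> 0 \<and> Dx lam x \<noteq> 0 \<and> Dx lam x \<noteq> 1"

lemma qf_eq: "qf lam = (\<lambda>t. 1 - (phi t lam)^2)" by (rule ext) (simp add: qf_def)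

lemma qY_derivs':
  assumes x: "x > 0" and hj: "\<forall>j. 1 \<le> j \<and> j \<le> lam \<longrightarrow> 1 - (phi x j)^2 \<noteq> 0"
    and u: "phi x lam \<noteq> 0"
  shows "(qf lam has_real_derivative Qd (real lam) (qf lam x) (yfun lam x) (inverse x)) (at x)"
    and "(yfun lam has_real_derivative Yd (real lam) (qf lam x) (yfun lam x) (inverse x)) (at x)"
  using qY_derivs[OF x hj u] unfolding qf_eq by (simp_all add: qf_def)

lemma Dx_deriv:
  assumes x: "x > 0" and hj: "\<forall>j. 1 \<le> j \<and> j \<le> lam \<longrightarrow> 1 - (phi x j)^2 \<noteq> 0"
    and u: "phi x lam \<noteq> 0"
  shows "(Dx lam has_real_derivative D1x lam x) (at x)"
    and "(D1x lam has_real_derivative D2x lam x) (at x)"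
proof -
  note h = qY_derivs'[OF x hj u]
  have x0: "x \<noteq> 0" using x by simp
  have e1: "Dx lam = (\<lambda>t. Dd (real lam) (qf lam t) (yfun lam t) (inverse t))" by (rule ext) (simp add: Dx_def)
  have e2: "D1x lam = (\<lambda>t. D1d (real lam) (qf lam t) (yfun lam t) (inverse t))" by (rule ext) (simp add: D1x_def)
  show "(Dx lam has_real_derivative D1x lam x) (at x)"
    unfolding e1 D1x_def by (rule Dd_deriv[OF x0 h])
  show "(D1x lam has_real_derivative D2x lam x) (at x)"
    unfolding e2 D2x_def by (rule D1d_deriv[OF x0 h])
qed

lemma Rfun_eq:
  assumes x: "x > 0" and hj: "\<forall>j. 1 \<le> j \<and> j \<le> lam \<longrightarrow> 1 - (phi x j)^2 \<noteq> 0"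
    and u: "phi x lam \<noteq> 0"
  shows "Rfun lam x = 2 * Dx lam x"
proof -
  have "deriv (yfun lam) x = Yd (real lam) (qf lam x) (yfun lam x) (inverse x)"
    by (rule DERIV_imp_deriv) (rule qY_derivs'(2)[OF x hj u])
  then show ?thesis unfolding Rfun_def Dx_def Yd_def Dd_def
    by (simp add: divide_inverse algebra_simps)
qed

lemma ev_ne:
  fixes f :: "real \<Rightarrow> real"
  assumes "isCont f x" "f x \<noteq> a"
  shows "eventually (\<lambda>y. f y \<noteq> a) (nhds x)"
proof -
  obtain e where e: "e > 0" "\<forall>y. dist x y < e \<longrightarrow> f y \<noteq> a"
    using continuous_at_avoid[OF assms] by blast
  show ?thesis unfolding eventually_nhds_metric
    using e by (metis dist_commute)
qed

lemma Cond_ev: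
  assumes c: "Cond lam x"
  shows "eventually (Cond lam) (nhds x)"
proof -
  have x: "x > 0" and hj: "\<forall>j. 1 \<le> j \<and> j \<le> lam \<longrightarrow> 1 - (phi x j)^2 \<noteq> 0"
    and u: "phi x lam \<noteq> 0" and d0: "Dx lam x \<noteq> 0" and d1: "Dx lam x \<noteq> 1"
    using c unfolding Cond_def by auto
  have "eventually (\<lambda>y. y \<in> {0<..}) (nhds x)" by (rule eventually_nhds_in_open) (use x in auto)
  then have ev1: "eventually (\<lambda>y. y > 0) (nhds x)" by simp
  have evj: "\<forall>j\<in>{1..lam}. eventually (\<lambda>y. 1 - (phi y j)^2 \<noteq> 0) (nhds x)"
  proof
    fix j assume j: "j \<in> {1..lam}"
    then obtain k where k: "j = Suc k" by (cases j) auto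
    have hk: "\<forall>i. 1 \<le> i \<and> i \<le> k \<longrightarrow> 1 - (phi x i)^2 \<noteq> 0" using hj j k by auto
    have "isCont (\<lambda>t. phi t (Suc k)) x"
      using phi_derivs[OF x hk] DERIV_isCont by blast
    then have "isCont (\<lambda>t. 1 - (phi t j)^2) x" unfolding k by (intro continuous_intros)
    then show "eventually (\<lambda>y. 1 - (phi y j)^2 \<noteq> 0) (nhds x)"
      by (rule ev_ne) (use hj j in auto)
  qed
  have ev2: "eventually (\<lambda>y. \<forall>j\<in>{1..lam}. 1 - (phi y j)^2 \<noteq> 0) (nhds x)"
    by (rule eventually_ball_finite) (use evj in auto)
  have ev3: "eventually (\<lambda>y. phi y lam \<noteq> 0) (nhds x)"
    using phi_derivs[OF x hj] DERIV_isCont ev_ne u by blast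
  have cD: "isCont (Dx lam) x" using Dx_deriv(1)[OF x hj u] DERIV_isCont by blast
  have ev4: "eventually (\<lambda>y. Dx lam y \<noteq> 0) (nhds x)" using ev_ne[OF cD d0] .
  have ev5: "eventually (\<lambda>y. Dx lam y \<noteq> 1) (nhds x)" using ev_ne[OF cD d1] .
  show ?thesis using ev1 ev2 ev3 ev4 ev5 unfolding Cond_def
    by eventually_elim auto
qed


lemma Cond_open: "open {x. Cond lam x}"
proof (subst open_subopen, intro ballI)
  fix x assume "x \<in> {x. Cond lam x}"
  then have "eventually (Cond lam) (nhds x)" using Cond_ev by blast
  then obtain S where "open S" "x \<in> S" "\<forall>y\<in>S. Cond lam y" unfolding eventually_nhds by blast
  then show "\<exists>T. open T \<and> x \<in> T \<and> T \<subseteq> {x. Cond lam x}" by blast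
qed

definition Tset :: "nat \<Rightarrow> real set" where "Tset lam = sqrt -` {x. Cond lam x}"

lemma Tset_open: "open (Tset lam)"
  unfolding Tset_def by (rule open_vimage[OF Cond_open]) (rule continuous_on_real_sqrt[OF continuous_on_id])

lemma Cond_parts:
  assumes "Cond lam x"
  shows "x > 0" "\<forall>j. 1 \<le> j \<and> j \<le> lam \<longrightarrow> 1 - (phi x j)^2 \<noteq> 0" "phi x lam \<noteq> 0"
    "Dx lam x \<noteq> 0" "Dx lam x \<noteq> 1"
  using assms unfolding Cond_def by auto

lemma Tset_pos: "t \<in> Tset lam \<Longrightarrow> t > 0"
proof -
  assume "t \<in> Tset lam"
  then have "sqrt t > 0" using Cond_parts(1) unfolding Tset_def by blast
  then show ?thesis by simp
qed

definition Gh :: "nat \<Rightarrow> real \<Rightarrow> real" where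
  "Gh lam t = 1 - 1 / Dx lam (sqrt t)"
definition g1h :: "nat \<Rightarrow> real \<Rightarrow> real" where
  "g1h lam t = D1x lam (sqrt t) / (Dx lam (sqrt t))^2 * (1 / (2 * sqrt t))"
definition g2h :: "nat \<Rightarrow> real \<Rightarrow> real" where
  "g2h lam t = (let D = Dx lam (sqrt t); D1 = D1x lam (sqrt t); D2 = D2x lam (sqrt t); x = sqrt t in
     (D2/D^2 - 2*D1^2/D^3)/(4*x^2) - D1/(D^2*(4*x^3)))"

lemma gfun_Gh: "t \<in> Tset lam \<Longrightarrow> gfun lam t = Gh lam t"
proof -
  assume t: "t \<in> Tset lam"
  then have c: "Cond lam (sqrt t)" unfolding Tset_def by simp
  have "Rfun lam (sqrt t) = 2 * Dx lam (sqrt t)"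
    by (rule Rfun_eq[OF Cond_parts(1-3)[OF c]])
  then show ?thesis unfolding gfun_def Gh_def by simp
qed

lemma chain_sqrt:
  assumes "(f has_real_derivative f') (at (sqrt t))" "t > 0"
  shows "((\<lambda>t. f (sqrt t)) has_real_derivative f' * (1 / (2 * sqrt t))) (at t)"
proof -
  have e: "inverse (sqrt t) / 2 = 1 / (2 * sqrt t)" by (simp add: inverse_eq_divide)
  show ?thesis using DERIV_chain2[OF assms(1) DERIV_real_sqrt[OF assms(2)]] unfolding e .
qed

lemma Gh_deriv:
  assumes t: "t \<in> Tset lam"
  shows "(Gh lam has_real_derivative g1h lam t) (at t)"
    and "(g1h lam has_real_derivative g2h lam t) (at t)"
proof -
  have c: "Cond lam (sqrt t)" using t unfolding Tset_def by simp
  note cp = Cond_parts[OF c]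
  have tp: "t > 0" using Tset_pos[OF t] .
  have h0: "((\<lambda>t. Dx lam (sqrt t)) has_real_derivative D1x lam (sqrt t) * (1 / (2 * sqrt t))) (at t)"
    by (rule chain_sqrt[OF Dx_deriv(1)[OF cp(1-3)] tp])
  have h1: "((\<lambda>t. D1x lam (sqrt t)) has_real_derivative D2x lam (sqrt t) * (1 / (2 * sqrt t))) (at t)"
    by (rule chain_sqrt[OF Dx_deriv(2)[OF cp(1-3)] tp])
  have Ge: "Gh lam = (\<lambda>t. 1 - 1 / Dx lam (sqrt t))" by (rule ext) (simp add: Gh_def)
  have ge: "g1h lam = (\<lambda>t. D1x lam (sqrt t) / (Dx lam (sqrt t))^2 * (1 / (2 * sqrt t)))" by (rule ext) (simp add: g1h_def)
  define x where "x = sqrt t"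
  define D where "D = Dx lam x"
  define D1 where "D1 = D1x lam x"
  define D2 where "D2 = D2x lam x"
  have x0: "x > 0" using cp(1) x_def by simp
  have D0: "D \<noteq> 0" using cp(4) unfolding D_def x_def .
  have h0': "((\<lambda>t. Dx lam (sqrt t)) has_real_derivative D1 * (1 / (2 * x))) (at t)"
    using h0 unfolding D1_def x_def .
  have h1': "((\<lambda>t. D1x lam (sqrt t)) has_real_derivative D2 * (1 / (2 * x))) (at t)"
    using h1 unfolding D2_def x_def .
  have h2x: "((\<lambda>x::real. 2 * x) has_real_derivative 2 * 1) (at x)" by (rule DERIV_cmult[OF DERIV_ident])
  have hf: "((\<lambda>x. 1 / (2 * x)) has_real_derivative (0 * (2 * x) - (2 * 1) * 1) / (2 * x)^2) (at x)"
    using DERIV_quotient[OF DERIV_const h2x] x0 by (simp add: power2_eq_square)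
  have hs: "((\<lambda>t. 1 / (2 * sqrt t)) has_real_derivative (0 * (2 * x) - (2 * 1) * 1) / (2 * x)^2 * (1 / (2 * x))) (at t)"
    using chain_sqrt[OF hf[unfolded x_def] tp] unfolding x_def .
  have D0': "Dx lam (sqrt t) \<noteq> 0" using D0 unfolding D_def x_def .
  have a1: "((\<lambda>t. 1 - 1 / Dx lam (sqrt t)) has_real_derivative 0 - (0 * D - D1 * (1 / (2 * x)) * 1) / D ^ Suc (Suc 0)) (at t)"
    using DERIV_diff[OF DERIV_const[of 1] DERIV_quotient[OF DERIV_const[of 1] h0' D0']] unfolding D_def x_def .
  have e1: "0 - (0 * D - D1 * (1 / (2 * x)) * 1) / D ^ Suc (Suc 0) = g1h lam t"
    unfolding g1h_def unfolding x_def[symmetric] unfolding D_def[symmetric] D1_def[symmetric] by (simp add: power2_eq_square)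
  show "(Gh lam has_real_derivative g1h lam t) (at t)"
    using a1 unfolding e1 Ge .
  have p2: "((\<lambda>t. (Dx lam (sqrt t))^2) has_real_derivative of_nat 2 * (D1 * (1 / (2 * x)) * D ^ (2 - Suc 0))) (at t)"
    using DERIV_power[OF h0', of 2] unfolding D_def x_def .
  have D20: "(Dx lam (sqrt t))^2 \<noteq> 0" using D0' by simp
  have a2: "((\<lambda>t. D1x lam (sqrt t) / (Dx lam (sqrt t))^2) has_real_derivative
      (D2 * (1 / (2 * x)) * D^2 - (of_nat 2 * (D1 * (1 / (2 * x)) * D ^ (2 - Suc 0))) * D1) / (D^2) ^ Suc (Suc 0)) (at t)"
    using DERIV_quotient[OF h1' p2 D20] unfolding D_def D1_def x_def .
  have a3: "((\<lambda>t. D1x lam (sqrt t) / (Dx lam (sqrt t))^2 * (1 / (2 * sqrt t))) has_real_derivative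
      (D2 * (1 / (2 * x)) * D^2 - (of_nat 2 * (D1 * (1 / (2 * x)) * D ^ (2 - Suc 0))) * D1) / (D^2) ^ Suc (Suc 0) * (1 / (2 * x))
      + (0 * (2 * x) - (2 * 1) * 1) / (2 * x)^2 * (1 / (2 * x)) * (D1 / D^2)) (at t)"
    using DERIV_mult[OF a2 hs] unfolding D_def D1_def x_def .
  have e2: "(D2 * (1 / (2 * x)) * D^2 - (of_nat 2 * (D1 * (1 / (2 * x)) * D ^ (2 - Suc 0))) * D1) / (D^2) ^ Suc (Suc 0) * (1 / (2 * x))
      + (0 * (2 * x) - (2 * 1) * 1) / (2 * x)^2 * (1 / (2 * x)) * (D1 / D^2) = g2h lam t"
    unfolding g2h_def Let_def unfolding x_def[symmetric] unfolding D_def[symmetric] D1_def[symmetric] D2_def[symmetric]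
    using D0 x0 apply (simp add: field_simps) apply algebra done
  show "(g1h lam has_real_derivative g2h lam t) (at t)"
    using a3 unfolding e2 ge .
qed


lemma H_alg:
  fixes g h a2 t l :: real
  assumes g0: "g \<noteq> 0" and g1: "g \<noteq> 1" and t0: "t \<noteq> 0"
    and pv: "a2 = (3 * g - 1) / (2 * g * (g - 1)) * h^2 - h / t
           + (g - 1)^2 / (2 * t^2) * (g - l^2 / g) + g / (2 * t)"
  shows "(8 * ((h + a2 * t) * (t * (h * (g * (g - 1)\<^sup>2)))) -
         (t * h)\<^sup>2 *
         (h * 4 * (g - 1)\<^sup>2 + 8 * (h * ((g - 1) * g)))) /
        (16 * (g * ((g - 1)\<^sup>2 * (g * (g - 1)\<^sup>2)))) -
        (8 * (h * ((l + g) * g)) - (l + g)\<^sup>2 * (h * 4)) /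
        (16 * (g * g)) +
        ((g + h * t) * (4 * g - 4) - t * g * (h * 4)) /
        ((4 * g - 4) * (4 * g - 4)) =
        g / (4 * g - 4)"
proof -
  define E where "E = g - 1"
  have E0: "E \<noteq> 0" using g1 E_def by simp
  have e4: "4 * g - 4 = 4 * E" using E_def by simp
  have pv': "a2 = (3 * g - 1) / (2 * g * E) * h^2 - h / t
           + E^2 / (2 * t^2) * (g - l^2 / g) + g / (2 * t)" using pv E_def by simp
  show ?thesis unfolding e4 E_def[symmetric] pv' using E0 g0 t0
    apply (simp add: field_simps)
    unfolding E_def apply algebra
    done
qed

lemma H_deriv_gen:
  fixes G G1 :: "real \<Rightarrow> real"
  assumes hG: "(G has_real_derivative G1 t) (at t)" and hG1: "(G1 has_real_derivative a2) (at t)"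
    and g0: "G t \<noteq> 0" and g1: "G t \<noteq> 1" and t0: "t \<noteq> 0"
    and pv: "a2 = (3 * G t - 1) / (2 * G t * (G t - 1)) * (G1 t)^2 - G1 t / t
           + (G t - 1)^2 / (2 * t^2) * (G t - l^2 / G t) + G t / (2 * t)"
  shows "((\<lambda>t. (t * G1 t)^2 / (4 * G t * (G t - 1)^2) - (l + G t)^2 / (4 * G t) + t * G t / (4 * (G t - 1)))
     has_real_derivative G t / (4 * (G t - 1))) (at t)"
  using g0 g1 t0
  apply (auto intro!: derivative_eq_intros hG hG1)
  apply (rule H_alg[OF g0 g1 t0 pv])
  done

lemma H2_alg:
  fixes g h :: real
  assumes g1: "g \<noteq> 1"
  shows "(h * (4 * g - 4) - g * (h * 4)) / ((4 * g - 4) * (4 * g - 4)) = - (h / (4 * (g - 1)^2))"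
proof -
  define E where "E = g - 1"
  have E0: "E \<noteq> 0" using g1 E_def by simp
  have e4: "4 * g - 4 = 4 * E" using E_def by simp
  show ?thesis unfolding e4 E_def[symmetric] using E0
    apply (simp add: field_simps)
    unfolding E_def apply algebra
    done
qed

lemma H2_deriv_gen:
  fixes G G1 :: "real \<Rightarrow> real"
  assumes hG: "(G has_real_derivative G1 t) (at t)" and g1: "G t \<noteq> 1"
  shows "((\<lambda>t. G t / (4 * (G t - 1))) has_real_derivative - (G1 t / (4 * (G t - 1)^2))) (at t)"
  using g1
  apply (auto intro!: derivative_eq_intros hG)
  apply (rule H2_alg[OF g1])
  done

lemma sigma_alg:
  fixes g h s l :: real
  assumes g0: "g \<noteq> 0" and g1: "g \<noteq> 1" and s0: "s \<noteq> 0"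
  shows "(s * (- (h / (4 * (g - 1)^2))))^2 =
     g / (4 * (g - 1)) * (4 * (g / (4 * (g - 1))) - 1) *
       (((s * h)^2 / (4 * g * (g - 1)^2) - (l + g)^2 / (4 * g) + s * g / (4 * (g - 1))) - s * (g / (4 * (g - 1))))
     + 1/16 * (4 * (1 + l) * (g / (4 * (g - 1))) - l)^2"
proof -
  define E where "E = g - 1"
  have E0: "E \<noteq> 0" using g1 E_def by simp
  show ?thesis unfolding E_def[symmetric] using E0 g0 s0
    apply (simp add: field_simps)
    unfolding E_def apply algebra
    done
qed

lemma PV_from_D:
  fixes D D1 D2 x l :: real
  assumes x: "x > 0" and d0: "D \<noteq> 0" and d1: "D \<noteq> 1"
  and ode: "2*D*(D-1)*D2 = (2*D-1)*D1^2-2*D*(D-1)*D1*(1/x)+4*((D-1)^2-l^2*D^2)*(1/x)^2+4*D^2*(D-1)^2"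
  shows "(D2/D^2 - 2*D1^2/D^3)/(4*x^2) - D1/(D^2*(4*x^3)) =
    (3 * (1-1/D) - 1) / (2 * (1-1/D) * ((1-1/D) - 1)) * (D1/D^2 * (1/(2*x)))^2
           - (D1/D^2 * (1/(2*x))) / x^2
           + ((1-1/D) - 1)^2 / (2 * (x^2)^2) * ((1-1/D) - l^2 / (1-1/D))
           + (1-1/D) / (2 * x^2)"
proof -
  define E where "E = D - 1"
  have dm: "E \<noteq> 0" using d1 E_def by simp
  have DE: "D = E + 1" using E_def by simp
  have a1: "(3 * (1-1/D) - 1) / (2 * (1-1/D) * ((1-1/D) - 1)) = -(2*D-3)*D/(2*E)"
    using d0 dm unfolding E_def by (simp add: field_simps)
  have a2: "((1-1/D) - 1)^2 / (2 * (x^2)^2) * ((1-1/D) - l^2 / (1-1/D)) 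
     = (E^2-l^2*D^2)/(2*D^3*E*x^4)"
    using d0 dm x unfolding E_def apply (simp add: field_simps power2_eq_square) apply (rule disjI2) by algebra
  have a3: "(1-1/D) / (2 * x^2) = E/(2*D*x^2)" using d0 x unfolding E_def by (simp add: field_simps)
  have ode': "D2 = ((2*D-1)*D1^2-2*D*E*D1*(1/x)+4*(E^2-l^2*D^2)*(1/x)^2+4*D^2*E^2)/(2*D*E)"
    using ode d0 dm unfolding E_def by (simp add: field_simps)
  have "(D2/D^2 - 2*D1^2/D^3)/(4*x^2) - D1/(D^2*(4*x^3)) =
    -(2*D-3)*D/(2*E) * (D1/D^2 * (1/(2*x)))^2
           - (D1/D^2 * (1/(2*x))) / x^2
           + (E^2-l^2*D^2)/(2*D^3*E*x^4)
           + E/(2*D*x^2)"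
    unfolding ode' using x d0 dm
    apply (simp add: field_simps)
    unfolding DE
    apply algebra
    done
  then show ?thesis unfolding a1 a2 a3 .
qed

lemma PV_at:
  assumes t: "t \<in> Tset lam"
  shows "g2h lam t = (3 * Gh lam t - 1) / (2 * Gh lam t * (Gh lam t - 1)) * (g1h lam t)^2 - g1h lam t / t
           + (Gh lam t - 1)^2 / (2 * t^2) * (Gh lam t - (real lam)^2 / Gh lam t) + Gh lam t / (2 * t)"
proof -
  have c: "Cond lam (sqrt t)" using t unfolding Tset_def by simp
  note cp = Cond_parts[OF c]
  have tp: "t > 0" using Tset_pos[OF t] .
  define x where "x = sqrt t"
  define D where "D = Dx lam x"
  define D1 where "D1 = D1x lam x"
  define D2 where "D2 = D2x lam x"
  have x0: "x > 0" using cp(1) x_def by simp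
  have D0: "D \<noteq> 0" using cp(4) unfolding D_def x_def .
  have D1': "D \<noteq> 1" using cp(5) unfolding D_def x_def .
  have tx: "t = x^2" unfolding x_def using tp by simp
  have ode: "2*D*(D-1)*D2 = (2*D-1)*D1^2-2*D*(D-1)*D1*(1/x)+4*((D-1)^2-(real lam)^2*D^2)*(1/x)^2+4*D^2*(D-1)^2"
    using core[of "real lam" "qf lam x" "yfun lam x" "inverse x"]
    unfolding Let_def D_def D1_def D2_def Dx_def D1x_def D2x_def by (simp add: inverse_eq_divide)
  have "g2h lam t = (D2/D^2 - 2*D1^2/D^3)/(4*x^2) - D1/(D^2*(4*x^3))"
    unfolding g2h_def Let_def unfolding x_def[symmetric] unfolding D_def[symmetric] D1_def[symmetric] D2_def[symmetric] ..
  also have "\<dots> = (3 * (1-1/D) - 1) / (2 * (1-1/D) * ((1-1/D) - 1)) * (D1/D^2 * (1/(2*x)))^2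
           - (D1/D^2 * (1/(2*x))) / x^2
           + ((1-1/D) - 1)^2 / (2 * (x^2)^2) * ((1-1/D) - (real lam)^2 / (1-1/D))
           + (1-1/D) / (2 * x^2)" by (rule PV_from_D[OF x0 D0 D1' ode])
  also have "\<dots> = (3 * Gh lam t - 1) / (2 * Gh lam t * (Gh lam t - 1)) * (g1h lam t)^2 - g1h lam t / t
           + (Gh lam t - 1)^2 / (2 * t^2) * (Gh lam t - (real lam)^2 / Gh lam t) + Gh lam t / (2 * t)"
    unfolding Gh_def g1h_def unfolding x_def[symmetric] unfolding D_def[symmetric] D1_def[symmetric] tx ..
  finally show ?thesis .
qed


definition Hh :: "nat \<Rightarrow> real \<Rightarrow> real" where
  "Hh lam t = (t * g1h lam t)^2 / (4 * Gh lam t * (Gh lam t - 1)^2) - (real lam + Gh lam t)^2 / (4 * Gh lam t)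
     + t * Gh lam t / (4 * (Gh lam t - 1))"

lemma Gh_ne:
  assumes t: "t \<in> Tset lam"
  shows "Gh lam t \<noteq> 0" "Gh lam t \<noteq> 1"
proof -
  have c: "Cond lam (sqrt t)" using t unfolding Tset_def by simp
  note cp = Cond_parts[OF c]
  show "Gh lam t \<noteq> 0" unfolding Gh_def using cp(4,5) by (simp add: field_simps)
  show "Gh lam t \<noteq> 1" unfolding Gh_def using cp(4) by simp
qed

lemma gfun_deriv:
  assumes t: "t \<in> Tset lam"
  shows "(gfun lam has_real_derivative g1h lam t) (at t)"
  by (rule has_field_derivative_transform_within_open[OF Gh_deriv(1)[OF t] Tset_open t])
     (simp add: gfun_Gh)

lemma deriv_gfun: "t \<in> Tset lam \<Longrightarrow> deriv (gfun lam) t = g1h lam t"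
  by (rule DERIV_imp_deriv[OF gfun_deriv])

lemma deriv_gfun_deriv:
  assumes t: "t \<in> Tset lam"
  shows "(deriv (gfun lam) has_real_derivative g2h lam t) (at t)"
  by (rule has_field_derivative_transform_within_open[OF Gh_deriv(2)[OF t] Tset_open t])
     (simp add: deriv_gfun)

lemma Hfun_Hh: "t \<in> Tset lam \<Longrightarrow> Hfun lam t = Hh lam t"
  unfolding Hfun_def Hh_def by (simp add: gfun_Gh deriv_gfun)

lemma Hh_deriv:
  assumes t: "t \<in> Tset lam"
  shows "(Hh lam has_real_derivative Gh lam t / (4 * (Gh lam t - 1))) (at t)"
proof -
  have e: "Hh lam = (\<lambda>t. (t * g1h lam t)^2 / (4 * Gh lam t * (Gh lam t - 1)^2) - (real lam + Gh lam t)^2 / (4 * Gh lam t)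
     + t * Gh lam t / (4 * (Gh lam t - 1)))" by (rule ext) (simp add: Hh_def)
  have t0: "t \<noteq> 0" using Tset_pos[OF t] by simp
  show ?thesis unfolding e
    by (rule H_deriv_gen[OF Gh_deriv(1)[OF t] Gh_deriv(2)[OF t] Gh_ne[OF t] t0 PV_at[OF t]])
qed

lemma deriv_Hfun:
  assumes t: "t \<in> Tset lam"
  shows "deriv (Hfun lam) t = Gh lam t / (4 * (Gh lam t - 1))"
proof -
  have "(Hfun lam has_real_derivative Gh lam t / (4 * (Gh lam t - 1))) (at t)"
    by (rule has_field_derivative_transform_within_open[OF Hh_deriv[OF t] Tset_open t])
       (metis Hfun_Hh)
  then show ?thesis by (rule DERIV_imp_deriv)
qed

lemma deriv_Hfun_deriv:
  assumes t: "t \<in> Tset lam"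
  shows "(deriv (Hfun lam) has_real_derivative - (g1h lam t / (4 * (Gh lam t - 1)^2))) (at t)"
  by (rule has_field_derivative_transform_within_open[OF H2_deriv_gen[of "Gh lam" "g1h lam" t, OF Gh_deriv(1)[OF t] Gh_ne(2)[OF t]] Tset_open t])
     (simp add: deriv_Hfun)

theorem theorem11:
  fixes lam :: nat and s :: real
  assumes s_pos: "s > 0"
    and phi_nz: "phi (sqrt s) lam \<noteq> 0"
    and phi_not_pm1: "\<forall>j. 1 \<le> j \<and> j \<le> lam \<longrightarrow> 1 - (phi (sqrt s) j)^2 \<noteq> 0"
    and R_nz: "Rfun lam (sqrt s) \<noteq> 0"
    and g_nz: "gfun lam s \<noteq> 0"
  shows "(deriv (deriv (gfun lam)) s =
           (3 * gfun lam s - 1) / (2 * gfun lam s * (gfun lam s - 1)) * (deriv (gfun lam) s)^2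
           - deriv (gfun lam) s / s
           + (gfun lam s - 1)^2 / (2 * s^2) * (gfun lam s - (real lam)^2 / gfun lam s)
           + gfun lam s / (2 * s))
         \<and> ((s * deriv (deriv (Hfun lam)) s)^2 =
           deriv (Hfun lam) s * (4 * deriv (Hfun lam) s - 1) * (Hfun lam s - s * deriv (Hfun lam) s)
           + 1/16 * (4 * (1 + real lam) * deriv (Hfun lam) s - real lam)^2)"
proof -
  have x0: "sqrt s > 0" using s_pos by simp
  have RD: "Rfun lam (sqrt s) = 2 * Dx lam (sqrt s)" by (rule Rfun_eq[OF x0 phi_not_pm1 phi_nz])
  have d0: "Dx lam (sqrt s) \<noteq> 0" using R_nz RD by simp
  have d1: "Dx lam (sqrt s) \<noteq> 1"
  proof
    assume "Dx lam (sqrt s) = 1"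
    then have "gfun lam s = 0" unfolding gfun_def RD by simp
    then show False using g_nz by simp
  qed
  have c: "Cond lam (sqrt s)" unfolding Cond_def using x0 phi_not_pm1 phi_nz d0 d1 by blast
  have sT: "s \<in> Tset lam" unfolding Tset_def using c by simp
  have dd: "deriv (deriv (gfun lam)) s = g2h lam s" by (rule DERIV_imp_deriv[OF deriv_gfun_deriv[OF sT]])
  have ddH: "deriv (deriv (Hfun lam)) s = - (g1h lam s / (4 * (Gh lam s - 1)^2))"
    by (rule DERIV_imp_deriv[OF deriv_Hfun_deriv[OF sT]])
  have s0: "s \<noteq> 0" using s_pos by simp
  show ?thesis
    unfolding dd ddH deriv_Hfun[OF sT] Hfun_Hh[OF sT] gfun_Gh[OF sT] deriv_gfun[OF sT] Hh_def
    using PV_at[OF sT] sigma_alg[OF Gh_ne[OF sT] s0, of "g1h lam s" "real lam"] by simp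
qed


end
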